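(* There is no polynomial $p$ together with a sequence $\{D_n\}_{n\ge1}$ of simple definite causal theories such that, for every $n$, $D_n$ is on signature $\{x_1,\dots,x_n\}$, the set of models of $D_n$ is exactly PARITY$_n$, and $|D_n|\le p(n)$.
   Context: A literal is a variable $x$ or its negation $\neg x$. A definite causal theory on signature $\{x_1,\dots,x_n\}$ is a finite set of causal rules $H\Leftarrow G$, where $H$ is a literal over $x_1,\dots,x_n$ or $\bot$, and $G$ is a propositional formula over $x_1,\dots,x_n$. It is simple if every body $G$ is a conjunction of literals. For $I\subseteq\{x_1,\dots,x_n\}$ (viewed as the interpretation making exactly the variables in $I$ true), the reduct $D^I$ is the set of heads $H$ of all rules $H\Leftarrow G$ of $D$ with $I\models G$. $I$ is a model of $D$ if $I$ is the unique interpretation of $\{x_1,\dots,x_n\}$ satisfying every element of $D^I$. The size of a simple definite theory is its number of rules. Strings $w\in\{0,1\}^n$ are identified with $\{x_i:w_i=1\}$; PARITY$_n$ is the set of strings in $\{0,1\}^n$ with an odd number of 1's. *)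

theory Defs
  imports Main "HOL-Computational_Algebra.Polynomial"
begin

text \<open>Variables are x_1,...,x_n, represented by the natural numbers 1..n.
  An interpretation is the set of variables it makes true.\<close>

datatype literal = Pos nat | Neg nat

datatype head = HLit literal | HBot

text \<open>A simple causal rule H <= G: the body G is a conjunction of literals,
  represented by the list of its conjuncts (empty list = empty conjunction = True).\<close>
type_synonym rule = "head \<times> literal list"

fun lit_var :: "literal \<Rightarrow> nat" where
  "lit_var (Pos x) = x" | "lit_var (Neg x) = x"

fun sat_lit :: "nat set \<Rightarrow> literal \<Rightarrow> bool" where
  "sat_lit I (Pos x) = (x \<in> I)"
| "sat_lit I (Neg x) = (x \<notin> I)"

fun sat_head :: "nat set \<Rightarrow> head \<Rightarrow> bool" where
  "sat_head I (HLit l) = sat_lit I l"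
| "sat_head I HBot = False"

definition sat_body :: "nat set \<Rightarrow> literal list \<Rightarrow> bool" where
  "sat_body I G = (\<forall>l\<in>set G. sat_lit I l)"

fun head_vars :: "head \<Rightarrow> nat set" where
  "head_vars (HLit l) = {lit_var l}"
| "head_vars HBot = {}"

definition simple_theory_on :: "nat \<Rightarrow> rule set \<Rightarrow> bool" where
  "simple_theory_on n D = (finite D \<and>
     (\<forall>(H, G)\<in>D. head_vars H \<subseteq> {1..n} \<and> lit_var ` set G \<subseteq> {1..n}))"

definition reduct :: "rule set \<Rightarrow> nat set \<Rightarrow> head set" where
  "reduct D I = {H. \<exists>G. (H, G) \<in> D \<and> sat_body I G}"

definition is_model :: "nat \<Rightarrow> rule set \<Rightarrow> nat set \<Rightarrow> bool" where
  "is_model n D I = (I \<subseteq> {1..n} \<and>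
     (\<forall>J. J \<subseteq> {1..n} \<longrightarrow> ((\<forall>H\<in>reduct D I. sat_head J H) \<longleftrightarrow> J = I)))"

definition models :: "nat \<Rightarrow> rule set \<Rightarrow> nat set set" where
  "models n D = {I. is_model n D I}"

definition parity :: "nat \<Rightarrow> nat set set" where
  "parity n = {I. I \<subseteq> {1..n} \<and> odd (card I)}"

end

theory Submission
  imports Defs "HOL-Library.FuncSet" "HOL-Real_Asymp.Real_Asymp"
begin

definition vars :: "literal list \<Rightarrow> nat set" where
  "vars G = lit_var ` set G"

definition flip :: "nat set \<Rightarrow> nat \<Rightarrow> nat set" where
  "flip E j = (if j \<in> E then E - {j} else insert j E)"

lemma sat_lit_cong: "(lit_var l \<in> E1) = (lit_var l \<in> E2) \<Longrightarrow> sat_lit E1 l = sat_lit E2 l"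
  by (cases l) auto

lemma sat_body_cong:
  assumes "\<And>x. x \<in> vars G \<Longrightarrow> (x \<in> E1) = (x \<in> E2)"
  shows "sat_body E1 G = sat_body E2 G"
  using assms sat_lit_cong unfolding sat_body_def vars_def by (metis image_eqI)

lemma sat_head_cong:
  assumes "\<And>x. x \<in> head_vars H \<Longrightarrow> (x \<in> E1) = (x \<in> E2)"
  shows "sat_head E1 H = sat_head E2 H"
proof (cases H)
  case (HLit l)
  then show ?thesis using assms sat_lit_cong[of l E1 E2] by simp
qed simp

lemma flip_mem: "x \<noteq> j \<Longrightarrow> (x \<in> flip E j) = (x \<in> E)"
  by (auto simp: flip_def)

lemma flip_mem_j: "(j \<in> flip E j) = (j \<notin> E)"
  by (auto simp: flip_def)

lemma flip_sub: "E \<subseteq> U \<Longrightarrow> j \<in> U \<Longrightarrow> flip E j \<subseteq> U"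
  by (auto simp: flip_def)

lemma flip_flip: "flip (flip E j) j = E"
  by (auto simp: flip_def)

lemma flip_even: "finite E \<Longrightarrow> even (card (flip E j)) = odd (card E)"
proof (cases "j \<in> E")
  case True
  assume f: "finite E"
  have "card E = Suc (card (E - {j}))" using True f
    by (metis card_Suc_Diff1)
  then show ?thesis using True by (simp add: flip_def)
next
  case False
  assume f: "finite E"
  then show ?thesis using False by (simp add: flip_def)
qed

lemma sat_agree:
  assumes "sat_body E1 G" "sat_body E2 G" "x \<in> vars G"
  shows "(x \<in> E1) = (x \<in> E2)"
proof -
  obtain l where l: "l \<in> set G" "lit_var l = x" using assms(3) unfolding vars_def by auto
  have "sat_lit E1 l" "sat_lit E2 l" using assms l unfolding sat_body_def by auto
  then show ?thesis using l by (cases l) auto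
qed

lemma count_sat:
  assumes "finite U" "vars G \<subseteq> U"
  shows "card {E\<in>Pow U. sat_body E G} \<le> 2 ^ (card U - card (vars G))"
proof -
  let ?S = "{E\<in>Pow U. sat_body E G}"
  have inj: "inj_on (\<lambda>E. E - vars G) ?S"
  proof (rule inj_onI)
    fix E1 E2 assume a: "E1 \<in> ?S" "E2 \<in> ?S" "E1 - vars G = E2 - vars G"
    show "E1 = E2"
    proof (rule set_eqI)
      fix x show "(x \<in> E1) = (x \<in> E2)"
        using a sat_agree[of E1 G E2 x] by (cases "x \<in> vars G") auto
    qed
  qed
  have sub: "(\<lambda>E. E - vars G) ` ?S \<subseteq> Pow (U - vars G)" by auto
  have "card ?S = card ((\<lambda>E. E - vars G) ` ?S)" using card_image[OF inj] by simp
  also have "\<dots> \<le> card (Pow (U - vars G))"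
    by (rule card_mono) (use assms sub in auto)
  also have "\<dots> = 2 ^ (card U - card (vars G))"
    using assms by (simp add: card_Pow card_Diff_subset finite_subset)
  finally show ?thesis .
qed


definition forced :: "nat set \<Rightarrow> literal list set \<Rightarrow> nat set \<Rightarrow> nat set \<Rightarrow> nat set" where
 "forced U B R \<rho> = {j \<in> U - R. \<exists>G\<in>B. vars G - {j} \<subseteq> R \<and> (\<forall>l\<in>set G. lit_var l \<noteq> j \<longrightarrow> sat_lit \<rho> l)
     \<and> \<not>(Pos j \<in> set G \<and> Neg j \<in> set G)}"

lemma forced_val:
  assumes "\<not> sat_body E G" "vars G - {j} \<subseteq> R" "\<forall>l\<in>set G. lit_var l \<noteq> j \<longrightarrow> sat_lit (E \<inter> R) l"
    "\<not>(Pos j \<in> set G \<and> Neg j \<in> set G)"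
  shows "(j \<in> E) = (Neg j \<in> set G)"
proof -
  obtain l where l: "l \<in> set G" "\<not> sat_lit E l" using assms(1) unfolding sat_body_def by auto
  have "lit_var l = j"
  proof (rule ccontr)
    assume ne: "lit_var l \<noteq> j"
    then have "lit_var l \<in> R" using assms(2) l(1) unfolding vars_def by auto
    then have "sat_lit (E \<inter> R) l = sat_lit E l" by (intro sat_lit_cong) auto
    then show False using assms(3) l ne by auto
  qed
  then show ?thesis using l assms(4) by (cases l) auto
qed

lemma kraft_fiber:
  assumes "finite U" "R \<subseteq> U" "T \<subseteq> Pow U" "\<forall>E\<in>T. \<forall>G\<in>B. \<not> sat_body E G"
  shows "card {E\<in>T. E \<inter> R = \<rho>} \<le> 2 ^ (card U - card R - card (forced U B R \<rho>))"
proof -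
  let ?F = "forced U B R \<rho>"
  let ?S = "{E\<in>T. E \<inter> R = \<rho>}"
  have inj: "inj_on (\<lambda>E. E - R - ?F) ?S"
  proof (rule inj_onI)
    fix E1 E2 assume a: "E1 \<in> ?S" "E2 \<in> ?S" "E1 - R - ?F = E2 - R - ?F"
    show "E1 = E2"
    proof (rule set_eqI)
      fix x show "(x \<in> E1) = (x \<in> E2)"
      proof (cases "x \<in> R")
        case True then show ?thesis using a(1,2) by blast
      next
        case nR: False
        show ?thesis
        proof (cases "x \<in> ?F")
          case True
          then obtain G where G: "G \<in> B" "vars G - {x} \<subseteq> R"
            "\<forall>l\<in>set G. lit_var l \<noteq> x \<longrightarrow> sat_lit \<rho> l" "\<not>(Pos x \<in> set G \<and> Neg x \<in> set G)"
            unfolding forced_def by blast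
          have "E1 \<inter> R = \<rho>" "E2 \<inter> R = \<rho>" using a by auto
          then have "(x \<in> E1) = (Neg x \<in> set G)" "(x \<in> E2) = (Neg x \<in> set G)"
            using forced_val[of E1 G x R] forced_val[of E2 G x R] G a(1,2) assms(4) by auto
          then show ?thesis by simp
        next
          case False then show ?thesis using nR a(3) by blast
        qed
      qed
    qed
  qed
  have Fsub: "?F \<subseteq> U - R" unfolding forced_def by auto
  have sub: "(\<lambda>E. E - R - ?F) ` ?S \<subseteq> Pow (U - R - ?F)" using assms(3) by auto
  have "card ?S = card ((\<lambda>E. E - R - ?F) ` ?S)" using card_image[OF inj] by simp
  also have "\<dots> \<le> card (Pow (U - R - ?F))"
    by (rule card_mono) (use assms sub in auto)
  also have "\<dots> = 2 ^ card (U - R - ?F)" using assms by (simp add: card_Pow)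
  also have "card (U - R - ?F) = card (U - R) - card ?F"
    using Fsub assms by (simp add: card_Diff_subset finite_subset)
  also have "card (U - R) = card U - card R"
    using assms by (simp add: card_Diff_subset finite_subset)
  finally show ?thesis .
qed

lemma card_forced_le:
  assumes "finite U" "R \<subseteq> U"
  shows "card (forced U B R \<rho>) \<le> card U - card R"
proof -
  have "forced U B R \<rho> \<subseteq> U - R" unfolding forced_def by auto
  then have "card (forced U B R \<rho>) \<le> card (U - R)" using assms by (intro card_mono) auto
  also have "card (U - R) = card U - card R"
    using assms by (simp add: card_Diff_subset finite_subset)
  finally show ?thesis .
qed

lemma kraft:
  assumes "finite U" "R \<subseteq> U" "T \<subseteq> Pow U" "\<forall>E\<in>T. \<forall>G\<in>B. \<not> sat_body E G"
  shows "(\<Sum>E\<in>T. (2::nat) ^ card (forced U B R (E \<inter> R))) \<le> 2 ^ card U"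
proof -
  have finT: "finite T" using assms by (meson finite_Pow_iff finite_subset)
  have fR: "finite R" using assms finite_subset by blast
  have "(\<Sum>E\<in>T. (2::nat) ^ card (forced U B R (E \<inter> R)))
      = (\<Sum>\<rho>\<in>Pow R. of_nat (card {E\<in>T. E \<inter> R = \<rho>}) * 2 ^ card (forced U B R \<rho>))"
    by (rule sum_fun_comp[where g="\<lambda>E. E \<inter> R" and f="\<lambda>\<rho>. (2::nat) ^ card (forced U B R \<rho>)"])
       (use finT fR in auto)
  also have "\<dots> \<le> (\<Sum>\<rho>\<in>Pow R. (2::nat) ^ (card U - card R))"
  proof (rule sum_mono)
    fix \<rho> assume "\<rho> \<in> Pow R"
    have c: "card (forced U B R \<rho>) \<le> card U - card R" using card_forced_le assms by blast
    have "card {E\<in>T. E \<inter> R = \<rho>} * 2 ^ card (forced U B R \<rho>)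
        \<le> 2 ^ (card U - card R - card (forced U B R \<rho>)) * 2 ^ card (forced U B R \<rho>)"
      using kraft_fiber[OF assms] by simp
    also have "\<dots> = 2 ^ (card U - card R)" using c by (simp add: power_add[symmetric])
    finally show "of_nat (card {E\<in>T. E \<inter> R = \<rho>}) * 2 ^ card (forced U B R \<rho>) \<le> (2::nat) ^ (card U - card R)"
      by simp
  qed
  also have "\<dots> = 2 ^ card R * 2 ^ (card U - card R)" using fR by (simp add: card_Pow)
  also have "\<dots> = 2 ^ card U"
    using card_mono[OF assms(1,2)] by (simp add: power_add[symmetric])
  finally show ?thesis .
qed


lemma jensen2:
  fixes f :: "'a \<Rightarrow> real"
  assumes "finite S" "S \<noteq> {}"
  shows "real (card S) * 2 powr (sum f S / card S) \<le> (\<Sum>x\<in>S. 2 powr f x)"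
proof -
  define a where "a = sum f S / card S"
  have cS: "real (card S) > 0" using assms by (simp add: card_gt_0_iff)
  have tang: "2 powr a * (1 + (f x - a) * ln 2) \<le> 2 powr f x" for x
  proof -
    have "1 + (f x - a) * ln 2 \<le> exp ((f x - a) * ln 2)" by (rule exp_ge_add_one_self)
    then have "exp (a * ln 2) * (1 + (f x - a) * ln 2) \<le> exp (a * ln 2) * exp ((f x - a) * ln 2)"
      by (intro mult_left_mono) auto
    also have "\<dots> = exp (f x * ln 2)" by (simp add: exp_add[symmetric] algebra_simps)
    finally show ?thesis by (simp add: powr_def mult.commute)
  qed
  have "(\<Sum>x\<in>S. 2 powr a * (1 + (f x - a) * ln 2)) \<le> (\<Sum>x\<in>S. 2 powr f x)"
    by (rule sum_mono) (rule tang)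
  moreover have "(\<Sum>x\<in>S. 2 powr a * (1 + (f x - a) * ln 2))
      = 2 powr a * (real (card S) + (sum f S - real (card S) * a) * ln 2)"
  proof -
    have "(\<Sum>x\<in>S. (f x - a) * ln 2) = (\<Sum>x\<in>S. (f x - a)) * ln 2"
      by (simp add: sum_distrib_right)
    also have "(\<Sum>x\<in>S. (f x - a)) = sum f S - real (card S) * a"
      by (simp add: sum_subtractf)
    finally have "(\<Sum>x\<in>S. 1 + (f x - a) * ln 2) = real (card S) + (sum f S - real (card S) * a) * ln 2"
      by (simp add: sum.distrib)
    then show ?thesis by (simp add: sum_distrib_left[symmetric])
  qed
  moreover have "sum f S - real (card S) * a = 0" using cS unfolding a_def by simp
  ultimately show ?thesis unfolding a_def by (simp add: mult.commute)
qed

lemma card_swap: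
  assumes "finite X" "finite Y"
  shows "(\<Sum>x\<in>X. card {y\<in>Y. P x y}) = (\<Sum>y\<in>Y. card {x\<in>X. P x y})"
proof -
  have e1: "card {y\<in>Y. P x y} = (\<Sum>y\<in>Y. if P x y then 1 else 0)" for x
    using assms by (simp add: sum.inter_filter[symmetric])
  have e2: "card {x\<in>X. P x y} = (\<Sum>x\<in>X. if P x y then 1 else 0)" for y
    using assms by (simp add: sum.inter_filter[symmetric])
  show ?thesis unfolding e1 e2 by (rule sum.swap)
qed

lemma card_Theta:
  assumes "finite U"
  shows "card (PiE U (\<lambda>_. {0..<k::nat})) = k ^ card U"
  using assms by (simp add: card_PiE)

lemma card_cond:
  assumes "finite U" "j \<in> U" "V \<subseteq> U" "j \<notin> V" "k \<ge> (1::nat)"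
  shows "card {t \<in> PiE U (\<lambda>_. {0..<k}). t j = 0 \<and> (\<forall>v\<in>V. t v \<noteq> 0)}
       = (k - 1) ^ card V * k ^ (card U - 1 - card V)"
proof -
  define S' where "S' u = (if u = j then {0} else if u \<in> V then {1..<k} else {0..<k})" for u
  have eq: "{t \<in> PiE U (\<lambda>_. {0..<k}). t j = 0 \<and> (\<forall>v\<in>V. t v \<noteq> 0)} = PiE U S'"
  proof (rule set_eqI)
    fix t show "t \<in> {t \<in> PiE U (\<lambda>_. {0..<k}). t j = 0 \<and> (\<forall>v\<in>V. t v \<noteq> 0)} \<longleftrightarrow> t \<in> PiE U S'"
    proof
      assume "t \<in> {t \<in> PiE U (\<lambda>_. {0..<k}). t j = 0 \<and> (\<forall>v\<in>V. t v \<noteq> 0)}"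
      then have a: "\<forall>i\<in>U. t i \<in> {0..<k}" "t \<in> extensional U" "t j = 0" "\<forall>v\<in>V. t v \<noteq> 0"
        by (auto simp: PiE_iff)
      have "\<forall>i\<in>U. t i \<in> S' i"
      proof
        fix i assume i: "i \<in> U"
        have "t i \<in> {0..<k}" using a(1) i by blast
        then show "t i \<in> S' i" using a(3,4) i unfolding S'_def by auto
      qed
      then show "t \<in> PiE U S'" using a by (simp add: PiE_iff)
    next
      assume "t \<in> PiE U S'"
      then have a: "\<forall>i\<in>U. t i \<in> S' i" "t \<in> extensional U" by (auto simp: PiE_iff)
      have "\<forall>i\<in>U. t i \<in> {0..<k}"
      proof
        fix i assume i: "i \<in> U"
        have "t i \<in> S' i" using a(1) i by blast
        then show "t i \<in> {0..<k}" using assms(5) unfolding S'_def by (simp split: if_splits)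
      qed
      moreover have "t j = 0"
      proof -
        have "t j \<in> S' j" using a(1) assms(2) by blast
        then show ?thesis unfolding S'_def by simp
      qed
      moreover have "\<forall>v\<in>V. t v \<noteq> 0"
      proof
        fix v assume v: "v \<in> V"
        have "t v \<in> S' v" using a(1) assms(3) v by blast
        then show "t v \<noteq> 0" using v assms(4) unfolding S'_def by (simp split: if_splits)
      qed
      ultimately show "t \<in> {t \<in> PiE U (\<lambda>_. {0..<k}). t j = 0 \<and> (\<forall>v\<in>V. t v \<noteq> 0)}"
        using a(2) by (simp add: PiE_iff)
    qed
  qed
  have "card (PiE U S') = (\<Prod>u\<in>U. card (S' u))" using assms by (simp add: card_PiE)
  also have "\<dots> = (\<Prod>u\<in>U. if u = j then 1 else if u \<in> V then k - 1 else k)"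
    by (rule prod.cong) (auto simp: S'_def)
  also have "\<dots> = (\<Prod>u\<in>U \<inter> {u. u = j}. 1) * (\<Prod>u\<in>U \<inter> - {u. u = j}. if u \<in> V then k - 1 else k)"
    using assms by (simp add: prod.If_cases)
  also have "\<dots> = (\<Prod>u\<in>U - {j}. if u \<in> V then k - 1 else k)"
    by (simp add: Diff_eq)
  also have "\<dots> = (\<Prod>u\<in>(U - {j}) \<inter> {u. u \<in> V}. k - 1) * (\<Prod>u\<in>(U - {j}) \<inter> - {u. u \<in> V}. k)"
    using assms by (simp add: prod.If_cases)
  also have "(U - {j}) \<inter> {u. u \<in> V} = V" using assms by auto
  also have "(U - {j}) \<inter> - {u. u \<in> V} = U - {j} - V" by auto
  finally have "card (PiE U S') = (k - 1) ^ card V * k ^ card (U - {j} - V)" by simp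
  moreover have "card (U - {j} - V) = card U - 1 - card V"
    using assms by (simp add: card_Diff_subset finite_subset subset_Diff_insert)
  ultimately show ?thesis using eq by simp
qed

lemma bern_bound:
  assumes "a \<le> w" "w \<ge> (1::nat)" "a + 1 \<le> n"
  shows "real (2*w) ^ n / (2 * real (2*w)) \<le> real (((2*w) - 1) ^ a * (2*w) ^ (n - 1 - a))"
proof -
  define k where "k = real (2*w)"
  have k1: "k \<ge> 2" using assms unfolding k_def by simp
  have "1 + real a * (- 1/k) \<le> (1 + (-1/k)) ^ a"
    by (rule Bernoulli_inequality) (use k1 in simp)
  moreover have "1 + real a * (- 1/k) \<ge> 1/2"
    using assms k1 unfolding k_def by (simp add: field_simps)
  ultimately have b: "1/2 \<le> (1 - 1/k) ^ a" by simp
  have "(k - 1) ^ a = k ^ a * (1 - 1/k) ^ a"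
    using k1 by (simp add: power_mult_distrib[symmetric] field_simps)
  moreover have "k ^ a * (1/2) \<le> k ^ a * (1 - 1/k) ^ a"
    by (rule mult_left_mono[OF b]) (use k1 in simp)
  ultimately have c: "k ^ a / 2 \<le> (k - 1) ^ a" by simp
  have n: "n = (n - 1 - a) + a + 1" using assms by simp
  have "k ^ n / (2 * k) = k ^ a / 2 * k ^ (n - 1 - a)"
    using k1 by (subst n) (simp add: power_add field_simps)
  also have "\<dots> \<le> (k - 1) ^ a * k ^ (n - 1 - a)"
    using c k1 by (intro mult_right_mono) auto
  finally show ?thesis unfolding k_def using assms by (simp add: of_nat_diff)
qed


lemma good_bound:
  assumes fU: "finite U" and fB: "finite B" and BU: "\<forall>G\<in>B. vars G \<subseteq> U" and TU: "T \<subseteq> Pow U"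
    and AU: "A \<subseteq> U" and nsat: "\<forall>E\<in>T. \<forall>G\<in>B. \<not> sat_body E G" and w1: "w \<ge> 1"
  shows "real (card {E\<in>T. h \<le> card {j\<in>A. \<exists>G\<in>B. sat_body (flip E j) G \<and> card (vars G) \<le> w}})
           * 2 powr (real h / (4 * real w)) \<le> 2 ^ card U"
proof -
  define n where "n = card U"
  define k where "k = 2 * w"
  define \<Theta> where "\<Theta> = PiE U (\<lambda>_. {0..<k})"
  define Rt where "Rt t = {v\<in>U. t v \<noteq> (0::nat)}" for t
  define X where "X t E = card (forced U B (Rt t) (E \<inter> Rt t))" for t E
  define good where "good = {E\<in>T. h \<le> card {j\<in>A. \<exists>G\<in>B. sat_body (flip E j) G \<and> card (vars G) \<le> w}}"
  have fT: "finite T" using TU fU by (meson finite_Pow_iff finite_subset)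
  have fTh: "finite \<Theta>" unfolding \<Theta>_def using fU by (simp add: finite_PiE)
  have cTh: "card \<Theta> = k ^ n" unfolding \<Theta>_def n_def using card_Theta[OF fU] by simp
  have k2: "k \<ge> 2" using w1 k_def by simp
  have cThpos: "real (card \<Theta>) > 0" using cTh k2 by simp
  have RtU: "Rt t \<subseteq> U" for t unfolding Rt_def by auto
  have K: "(\<Sum>E\<in>T. 2 powr real (X t E)) \<le> 2 ^ n" for t
  proof -
    have "(\<Sum>E\<in>T. (2::nat) ^ X t E) \<le> 2 ^ n"
      unfolding X_def n_def by (rule kraft[OF fU RtU TU nsat])
    then have "real (\<Sum>E\<in>T. (2::nat) ^ X t E) \<le> 2 ^ n" by (metis of_nat_le_iff of_nat_numeral of_nat_power)
    then show ?thesis by (simp add: powr_realpow)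
  qed
  have S: "(\<Sum>E\<in>T. \<Sum>t\<in>\<Theta>. 2 powr real (X t E)) \<le> real (card \<Theta>) * 2 ^ n"
  proof -
    have "(\<Sum>E\<in>T. \<Sum>t\<in>\<Theta>. 2 powr real (X t E)) = (\<Sum>t\<in>\<Theta>. \<Sum>E\<in>T. 2 powr real (X t E))"
      by (rule sum.swap)
    also have "\<dots> \<le> (\<Sum>t\<in>\<Theta>. 2 ^ n)" by (rule sum_mono) (rule K)
    finally show ?thesis by simp
  qed
  have G: "real (card \<Theta>) * 2 powr (real h / (4 * real w)) \<le> (\<Sum>t\<in>\<Theta>. 2 powr real (X t E))"
    if E: "E \<in> good" for E
  proof -
    define N where "N = {j\<in>A. \<exists>G\<in>B. sat_body (flip E j) G \<and> card (vars G) \<le> w}"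
    have ET: "E \<in> T" and hN: "h \<le> card N" using E unfolding good_def N_def by auto
    have "N \<subseteq> U" unfolding N_def using AU by auto
    then have fN: "finite N" using fU finite_subset by auto
    define Gs where "Gs j = (SOME G. G \<in> B \<and> sat_body (flip E j) G \<and> card (vars G) \<le> w)" for j
    have Gs: "Gs j \<in> B \<and> sat_body (flip E j) (Gs j) \<and> card (vars (Gs j)) \<le> w" if "j \<in> N" for j
    proof -
      have "\<exists>G. G \<in> B \<and> sat_body (flip E j) G \<and> card (vars G) \<le> w" using that unfolding N_def by auto
      then show ?thesis unfolding Gs_def by (rule someI_ex)
    qed
    define V where "V j = vars (Gs j) - {j}" for j
    define Y where "Y t = card {j\<in>N. t j = 0 \<and> (\<forall>v\<in>V j. t v \<noteq> 0)}" for t :: "nat \<Rightarrow> nat"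
    have YX: "Y t \<le> X t E" for t
    proof -
      have "{j\<in>N. t j = 0 \<and> (\<forall>v\<in>V j. t v \<noteq> 0)} \<subseteq> forced U B (Rt t) (E \<inter> Rt t)"
      proof
        fix j assume j: "j \<in> {j\<in>N. t j = 0 \<and> (\<forall>v\<in>V j. t v \<noteq> 0)}"
        then have jN: "j \<in> N" and tj: "t j = 0" and tv: "\<forall>v\<in>V j. t v \<noteq> 0" by auto
        have jU: "j \<in> U" using jN AU unfolding N_def by auto
        note g = Gs[OF jN]
        have vs: "vars (Gs j) - {j} \<subseteq> Rt t"
          using tv g BU unfolding V_def Rt_def by auto
        have lits: "\<forall>l\<in>set (Gs j). lit_var l \<noteq> j \<longrightarrow> sat_lit (E \<inter> Rt t) l"
        proof (intro ballI impI)
          fix l assume l: "l \<in> set (Gs j)" "lit_var l \<noteq> j"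
          have "sat_lit (flip E j) l" using g l unfolding sat_body_def by auto
          moreover have "sat_lit (flip E j) l = sat_lit E l"
            by (rule sat_lit_cong) (simp add: flip_mem l(2))
          moreover have "lit_var l \<in> Rt t" using vs l unfolding vars_def by auto
          then have "sat_lit (E \<inter> Rt t) l = sat_lit E l" by (intro sat_lit_cong) auto
          ultimately show "sat_lit (E \<inter> Rt t) l" by simp
        qed
        have nb: "\<not>(Pos j \<in> set (Gs j) \<and> Neg j \<in> set (Gs j))"
        proof
          assume "Pos j \<in> set (Gs j) \<and> Neg j \<in> set (Gs j)"
          then have "sat_lit (flip E j) (Pos j)" "sat_lit (flip E j) (Neg j)"
            using g unfolding sat_body_def by auto
          then show False by simp
        qed
        show "j \<in> forced U B (Rt t) (E \<inter> Rt t)"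
          unfolding forced_def using jU tj Rt_def g vs lits nb by auto
      qed
      moreover have "finite (forced U B (Rt t) (E \<inter> Rt t))"
        unfolding forced_def using fU by auto
      ultimately show ?thesis unfolding Y_def X_def by (rule card_mono[rotated])
    qed
    have sumY: "real (card N) * (real k ^ n / (2 * real k)) \<le> real (\<Sum>t\<in>\<Theta>. Y t)"
    proof -
      have "(\<Sum>t\<in>\<Theta>. Y t) = (\<Sum>j\<in>N. card {t\<in>\<Theta>. t j = 0 \<and> (\<forall>v\<in>V j. t v \<noteq> 0)})"
        unfolding Y_def by (rule card_swap[OF fTh fN])
      moreover have "real k ^ n / (2 * real k) \<le> real (card {t\<in>\<Theta>. t j = 0 \<and> (\<forall>v\<in>V j. t v \<noteq> 0)})"
        if j: "j \<in> N" for j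
      proof -
        have jU: "j \<in> U" using j AU unfolding N_def by auto
        have VU: "V j \<subseteq> U - {j}" using Gs[OF j] BU unfolding V_def by auto
        have cV: "card (V j) \<le> w"
          using Gs[OF j] unfolding V_def by (meson card_Diff1_le dual_order.trans)
        have cV2: "card (V j) + 1 \<le> n"
        proof -
          have "card (V j) \<le> card (U - {j})" using VU fU by (intro card_mono) auto
          moreover have "card U > 0" using jU fU card_gt_0_iff by blast
          ultimately show ?thesis using jU fU unfolding n_def by (simp add: card_Diff_singleton)
        qed
        have "card {t\<in>\<Theta>. t j = 0 \<and> (\<forall>v\<in>V j. t v \<noteq> 0)} = (k - 1) ^ card (V j) * k ^ (n - 1 - card (V j))"
          unfolding \<Theta>_def n_def using card_cond[OF fU jU, of "V j" k] VU k2 by auto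
        then show ?thesis using bern_bound[OF cV w1 cV2] unfolding k_def by simp
      qed
      ultimately show ?thesis
        by (simp add: sum_bounded_below[where K = "real k ^ n / (2 * real k)", of N, simplified]
            of_nat_sum)
    qed
    have avg: "real h / (4 * real w) \<le> real (\<Sum>t\<in>\<Theta>. Y t) / real (card \<Theta>)"
    proof -
      have "real h / (4 * real w) \<le> real (card N) / (2 * real k)"
        using hN w1 unfolding k_def by (simp add: divide_right_mono)
      also have "\<dots> = real (card N) * (real k ^ n / (2 * real k)) / real (card \<Theta>)"
        using cTh k2 by simp
      also have "\<dots> \<le> real (\<Sum>t\<in>\<Theta>. Y t) / real (card \<Theta>)"
        by (rule divide_right_mono[OF sumY]) simp
      finally show ?thesis .
    qed
    have "real (card \<Theta>) * 2 powr (real h / (4 * real w))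
        \<le> real (card \<Theta>) * 2 powr ((\<Sum>t\<in>\<Theta>. real (Y t)) / real (card \<Theta>))"
      using avg cThpos by (intro mult_left_mono) (auto simp: of_nat_sum)
    also have "\<dots> \<le> (\<Sum>t\<in>\<Theta>. 2 powr real (Y t))"
      by (rule jensen2) (use fTh cThpos in auto)
    also have "\<dots> \<le> (\<Sum>t\<in>\<Theta>. 2 powr real (X t E))"
      by (rule sum_mono) (use YX in simp)
    finally show ?thesis .
  qed
  have fg: "finite good" unfolding good_def using fT by auto
  have "real (card good) * (real (card \<Theta>) * 2 powr (real h / (4 * real w)))
      = (\<Sum>E\<in>good. real (card \<Theta>) * 2 powr (real h / (4 * real w)))" by simp
  also have "\<dots> \<le> (\<Sum>E\<in>good. \<Sum>t\<in>\<Theta>. 2 powr real (X t E))"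
    by (rule sum_mono) (rule G)
  also have "\<dots> \<le> (\<Sum>E\<in>T. \<Sum>t\<in>\<Theta>. 2 powr real (X t E))"
    by (rule sum_mono2) (use fT good_def in \<open>auto intro: sum_nonneg\<close>)
  also have "\<dots> \<le> real (card \<Theta>) * 2 ^ n" by (rule S)
  finally have "real (card \<Theta>) * (real (card good) * 2 powr (real h / (4 * real w))) \<le> real (card \<Theta>) * 2 ^ n"
    by (simp add: algebra_simps)
  then show ?thesis using cThpos unfolding good_def n_def by simp
qed


lemma flip_inj: "inj_on (\<lambda>E. flip E j) S"
  by (rule inj_onI) (metis flip_flip)

lemma bad_bound:
  assumes fU: "finite U" and fB: "finite B" and BU: "\<forall>G\<in>B. vars G \<subseteq> U" and TU: "T \<subseteq> Pow U"
    and AU: "A \<subseteq> U" and nsat: "\<forall>E\<in>T. \<forall>G\<in>B. \<not> sat_body E G"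
    and crit: "\<forall>E\<in>T. \<forall>j\<in>A. \<exists>G\<in>B. sat_body (flip E j) G"
  shows "real (card {E\<in>T. c \<le> card {j\<in>A. \<not>(\<exists>G\<in>B. sat_body (flip E j) G \<and> card (vars G) \<le> w)}}) * real c
           \<le> real (card B) * (real (card U) * 2 ^ card U / 2 ^ (w + 1))"
proof -
  define n where "n = card U"
  define W where "W E = {j\<in>A. \<not>(\<exists>G\<in>B. sat_body (flip E j) G \<and> card (vars G) \<le> w)}" for E
  define bad where "bad = {E\<in>T. c \<le> card (W E)}"
  define Bw where "Bw = {G\<in>B. w < card (vars G)}"
  have fT: "finite T" using TU fU by (meson finite_Pow_iff finite_subset)
  have fbad: "finite bad" unfolding bad_def using fT by auto
  have fBw: "finite Bw" unfolding Bw_def using fB by auto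
  have WE: "card (W E) \<le> (\<Sum>G\<in>Bw. card {j\<in>U. sat_body (flip E j) G})" if E: "E \<in> T" for E
  proof -
    have "W E \<subseteq> (\<Union>G\<in>Bw. {j\<in>U. sat_body (flip E j) G})"
    proof
      fix j assume j: "j \<in> W E"
      then have jA: "j \<in> A" unfolding W_def by auto
      obtain G where G: "G \<in> B" "sat_body (flip E j) G" using crit E jA by blast
      then have "G \<in> Bw" using j unfolding W_def Bw_def by auto
      then show "j \<in> (\<Union>G\<in>Bw. {j\<in>U. sat_body (flip E j) G})" using G jA AU by auto
    qed
    then have "card (W E) \<le> card (\<Union>G\<in>Bw. {j\<in>U. sat_body (flip E j) G})"
      by (rule card_mono[rotated]) (use fBw fU in auto)
    also have "\<dots> \<le> (\<Sum>G\<in>Bw. card {j\<in>U. sat_body (flip E j) G})" by (rule card_UN_le[OF fBw])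
    finally show ?thesis .
  qed
  have step1: "c * card bad \<le> (\<Sum>G\<in>Bw. \<Sum>j\<in>U. card {E\<in>bad. sat_body (flip E j) G})"
  proof -
    have "c * card bad = (\<Sum>E\<in>bad. c)" by simp
    also have "\<dots> \<le> (\<Sum>E\<in>bad. card (W E))" by (rule sum_mono) (auto simp: bad_def)
    also have "\<dots> \<le> (\<Sum>E\<in>bad. \<Sum>G\<in>Bw. card {j\<in>U. sat_body (flip E j) G})"
    proof (rule sum_mono)
      fix E assume "E \<in> bad"
      then have "E \<in> T" unfolding bad_def by simp
      then show "card (W E) \<le> (\<Sum>G\<in>Bw. card {j\<in>U. sat_body (flip E j) G})" by (rule WE)
    qed
    also have "\<dots> = (\<Sum>G\<in>Bw. \<Sum>E\<in>bad. card {j\<in>U. sat_body (flip E j) G})" by (rule sum.swap)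
    also have "\<dots> = (\<Sum>G\<in>Bw. \<Sum>j\<in>U. card {E\<in>bad. sat_body (flip E j) G})"
      by (rule sum.cong[OF refl]) (rule card_swap[OF fbad fU])
    finally show ?thesis .
  qed
  have inner: "card {E\<in>bad. sat_body (flip E j) G} \<le> (if j \<in> vars G then 2 ^ (n - card (vars G)) else 0)"
    if G: "G \<in> Bw" and j: "j \<in> U" for G j
  proof (cases "j \<in> vars G")
    case True
    have GB: "G \<in> B" using G Bw_def by auto
    have "card {E\<in>bad. sat_body (flip E j) G} = card ((\<lambda>E. flip E j) ` {E\<in>bad. sat_body (flip E j) G})"
      by (simp add: card_image flip_inj)
    also have "\<dots> \<le> card {E\<in>Pow U. sat_body E G}"
    proof (rule card_mono)
      show "(\<lambda>E. flip E j) ` {E\<in>bad. sat_body (flip E j) G} \<subseteq> {E\<in>Pow U. sat_body E G}"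
      proof
        fix x assume "x \<in> (\<lambda>E. flip E j) ` {E\<in>bad. sat_body (flip E j) G}"
        then obtain E where E: "E \<in> bad" "sat_body (flip E j) G" "x = flip E j" by auto
        have "E \<subseteq> U" using E(1) TU unfolding bad_def by auto
        then have "flip E j \<subseteq> U" using flip_sub j by blast
        then show "x \<in> {E\<in>Pow U. sat_body E G}" using E by auto
      qed
    qed (use fU in auto)
    also have "\<dots> \<le> 2 ^ (n - card (vars G))" unfolding n_def by (rule count_sat[OF fU]) (use BU GB in auto)
    finally show ?thesis using True by simp
  next
    case False
    have "{E\<in>bad. sat_body (flip E j) G} = {}"
    proof -
      have "sat_body (flip E j) G = sat_body E G" for E
        by (rule sat_body_cong) (use False flip_mem in metis)
      then show ?thesis using nsat G unfolding bad_def Bw_def by auto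
    qed
    then have "card {E\<in>bad. sat_body (flip E j) G} = 0" by (metis card.empty)
    then show ?thesis using False by simp
  qed
  have perG: "real (\<Sum>j\<in>U. card {E\<in>bad. sat_body (flip E j) G}) \<le> real n * 2 ^ n / 2 ^ (w + 1)"
    if G: "G \<in> Bw" for G
  proof -
    define v where "v = card (vars G)"
    have GB: "G \<in> B" and wv: "w < v" using G Bw_def v_def by auto
    have vU: "vars G \<subseteq> U" using BU GB by auto
    have vn: "v \<le> n" unfolding v_def n_def using vU fU by (simp add: card_mono)
    have "(\<Sum>j\<in>U. card {E\<in>bad. sat_body (flip E j) G}) \<le> (\<Sum>j\<in>U. if j \<in> vars G then 2 ^ (n - v) else 0)"
    proof (rule sum_mono)
      fix j assume "j \<in> U"
      show "card {E\<in>bad. sat_body (flip E j) G} \<le> (if j \<in> vars G then 2 ^ (n - v) else 0)"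
        unfolding v_def by (rule inner[OF G \<open>j \<in> U\<close>])
    qed
    also have "\<dots> = v * 2 ^ (n - v)"
      using fU vU by (simp add: sum.If_cases Int_absorb1 v_def)
    finally have "real (\<Sum>j\<in>U. card {E\<in>bad. sat_body (flip E j) G}) \<le> real (v * 2 ^ (n - v))"
      by (rule of_nat_mono)
    also have "\<dots> = real v * 2 ^ (n - v)" by simp
    also have "\<dots> = real v * (2 ^ n / 2 ^ v)" using vn by (simp add: power_diff)
    also have "\<dots> \<le> real n * (2 ^ n / 2 ^ (w + 1))"
    proof (rule mult_mono)
      show "2 ^ n / 2 ^ v \<le> (2::real) ^ n / 2 ^ (w + 1)"
      proof (rule divide_left_mono)
        show "(2::real) ^ (w + 1) \<le> 2 ^ v" by (rule power_increasing) (use wv in auto)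
      qed auto
    qed (use vn in auto)
    finally show ?thesis by simp
  qed
  have "real c * real (card bad) \<le> real (\<Sum>G\<in>Bw. \<Sum>j\<in>U. card {E\<in>bad. sat_body (flip E j) G})"
    using of_nat_mono[OF step1, where 'a=real] by simp
  also have "\<dots> = (\<Sum>G\<in>Bw. real (\<Sum>j\<in>U. card {E\<in>bad. sat_body (flip E j) G}))" by (rule of_nat_sum)
  also have "\<dots> \<le> (\<Sum>G\<in>Bw. real n * 2 ^ n / 2 ^ (w + 1))" by (rule sum_mono) (rule perG)
  also have "\<dots> = real (card Bw) * (real n * 2 ^ n / 2 ^ (w + 1))" by simp
  also have "\<dots> \<le> real (card B) * (real n * 2 ^ n / 2 ^ (w + 1))"
  proof (rule mult_right_mono)
    have "Bw \<subseteq> B" unfolding Bw_def by auto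
    then have "card Bw \<le> card B" using fB by (rule card_mono[rotated])
    then show "real (card Bw) \<le> real (card B)" by simp
  qed simp
  finally show ?thesis unfolding bad_def W_def n_def by (simp add: mult.commute)
qed


lemma core:
  assumes fU: "finite U" and fB: "finite B" and BU: "\<forall>G\<in>B. vars G \<subseteq> U" and TU: "T \<subseteq> Pow U"
    and AU: "A \<subseteq> U" and nsat: "\<forall>E\<in>T. \<forall>G\<in>B. \<not> sat_body E G"
    and crit: "\<forall>E\<in>T. \<forall>j\<in>A. \<exists>G\<in>B. sat_body (flip E j) G"
    and w1: "w \<ge> 1" and c0: "c > 0" and ch: "c + h \<le> card A + 1"
  shows "real (card T) \<le> 2 ^ card U / 2 powr (real h / (4 * real w))
           + real (card B) * (real (card U) * 2 ^ card U / 2 ^ (w + 1)) / real c"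
proof -
  define N where "N E = {j\<in>A. \<exists>G\<in>B. sat_body (flip E j) G \<and> card (vars G) \<le> w}" for E
  define W where "W E = {j\<in>A. \<not>(\<exists>G\<in>B. sat_body (flip E j) G \<and> card (vars G) \<le> w)}" for E
  define good where "good = {E\<in>T. h \<le> card (N E)}"
  define bad where "bad = {E\<in>T. c \<le> card (W E)}"
  have fT: "finite T" using TU fU by (meson finite_Pow_iff finite_subset)
  have fA: "finite A" using AU fU finite_subset by auto
  have sub: "T \<subseteq> good \<union> bad"
  proof
    fix E assume E: "E \<in> T"
    show "E \<in> good \<union> bad"
    proof (cases "h \<le> card (N E)")
      case True then show ?thesis using E good_def by auto
    next
      case False
      have "W E = A - N E" unfolding W_def N_def by auto
      moreover have "N E \<subseteq> A" unfolding N_def by auto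
      ultimately have "card (W E) = card A - card (N E)" using fA by (simp add: card_Diff_subset finite_subset)
      then have "c \<le> card (W E)" using False ch by linarith
      then show ?thesis using E bad_def by auto
    qed
  qed
  have "card T \<le> card (good \<union> bad)" by (rule card_mono) (use sub fT good_def bad_def in auto)
  also have "\<dots> \<le> card good + card bad" by (rule card_Un_le)
  finally have cT: "real (card T) \<le> real (card good) + real (card bad)" by linarith
  have p: "2 powr (real h / (4 * real w)) > 0" by simp
  have g: "real (card good) * 2 powr (real h / (4 * real w)) \<le> 2 ^ card U"
    unfolding good_def N_def by (rule good_bound[OF fU fB BU TU AU nsat w1])
  then have g2: "real (card good) \<le> 2 ^ card U / 2 powr (real h / (4 * real w))"
    using p by (simp add: field_simps)
  have b: "real (card bad) * real c \<le> real (card B) * (real (card U) * 2 ^ card U / 2 ^ (w + 1))"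
    unfolding bad_def W_def by (rule bad_bound[OF fU fB BU TU AU nsat crit])
  then have b2: "real (card bad) \<le> real (card B) * (real (card U) * 2 ^ card U / 2 ^ (w + 1)) / real c"
    using c0 by (simp add: field_simps)
  show ?thesis using cT g2 b2 by linarith
qed


lemma model_heads:
  assumes "is_model n D K" "(H, G) \<in> D" "sat_body K G"
  shows "sat_head K H"
proof -
  have "H \<in> reduct D K" using assms unfolding reduct_def by auto
  moreover have "K \<subseteq> {1..n}" using assms unfolding is_model_def by auto
  ultimately show ?thesis using assms(1) unfolding is_model_def by blast
qed

lemma model_lit:
  assumes "is_model n D K" "i \<in> {1..n}"
  shows "\<exists>l G. (HLit l, G) \<in> D \<and> lit_var l = i \<and> sat_body K G"
proof -
  have KU: "K \<subseteq> {1..n}" using assms unfolding is_model_def by auto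
  have JU: "flip K i \<subseteq> {1..n}" using flip_sub[OF KU assms(2)] .
  have ne: "flip K i \<noteq> K" using flip_mem_j[of i K] by auto
  have "\<not> (\<forall>H\<in>reduct D K. sat_head (flip K i) H)"
    using assms(1) JU ne unfolding is_model_def by blast
  then obtain H where H: "H \<in> reduct D K" "\<not> sat_head (flip K i) H" by blast
  then obtain G where G: "(H, G) \<in> D" "sat_body K G" unfolding reduct_def by auto
  have sK: "sat_head K H" using model_heads[OF assms(1) G] .
  show ?thesis
  proof (cases H)
    case (HLit l)
    have "lit_var l = i"
    proof (rule ccontr)
      assume "lit_var l \<noteq> i"
      then have "sat_lit (flip K i) l = sat_lit K l" by (intro sat_lit_cong) (simp add: flip_mem)
      then show False using H(2) sK HLit by simp
    qed
    then show ?thesis using G HLit by blast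
  next
    case HBot then show ?thesis using sK by simp
  qed
qed

lemma is_model_iff:
  assumes "models n D = parity n" "E \<subseteq> {1..n}"
  shows "is_model n D E \<longleftrightarrow> odd (card E)"
proof -
  have "is_model n D E \<longleftrightarrow> E \<in> models n D" unfolding models_def by simp
  also have "\<dots> \<longleftrightarrow> E \<in> parity n" using assms by simp
  finally show ?thesis using assms unfolding parity_def by auto
qed

lemma card_even:
  fixes U :: "nat set"
  assumes "finite U" "a \<in> U"
  shows "card {E\<in>Pow U. even (card E)} * 2 = 2 ^ card U"
proof -
  define Ev where "Ev = {E\<in>Pow U. even (card E)}"
  define Od where "Od = {E\<in>Pow U. odd (card E)}"
  have fin: "finite (Pow U)" using assms by simp
  have fE: "finite E" if "E \<in> Pow U" for E using that assms finite_subset by auto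
  have bij: "bij_betw (\<lambda>E. flip E a) Ev Od"
  proof (rule bij_betw_imageI)
    show "inj_on (\<lambda>E. flip E a) Ev" by (rule flip_inj)
    show "(\<lambda>E. flip E a) ` Ev = Od"
    proof
      show "(\<lambda>E. flip E a) ` Ev \<subseteq> Od"
      proof
        fix x assume "x \<in> (\<lambda>E. flip E a) ` Ev"
        then obtain E where E: "E \<in> Ev" "x = flip E a" by auto
        have "flip E a \<subseteq> U" using E(1) flip_sub[of E U a] assms(2) unfolding Ev_def by auto
        moreover have "odd (card (flip E a))" using E(1) flip_even[of E a] fE unfolding Ev_def by auto
        ultimately show "x \<in> Od" using E(2) unfolding Od_def by auto
      qed
      show "Od \<subseteq> (\<lambda>E. flip E a) ` Ev"
      proof
        fix E assume E: "E \<in> Od"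
        have "flip E a \<subseteq> U" using E flip_sub[of E U a] assms(2) unfolding Od_def by auto
        moreover have "even (card (flip E a))" using E flip_even[of E a] fE unfolding Od_def by auto
        ultimately have "flip E a \<in> Ev" unfolding Ev_def by auto
        moreover have "E = flip (flip E a) a" by (simp add: flip_flip)
        ultimately show "E \<in> (\<lambda>E. flip E a) ` Ev" by blast
      qed
    qed
  qed
  have "card Ev = card Od" using bij_betw_same_card[OF bij] .
  moreover have "Pow U = Ev \<union> Od" "Ev \<inter> Od = {}" unfolding Ev_def Od_def by auto
  then have "card (Pow U) = card Ev + card Od"
    using fin by (metis card_Un_disjoint finite_Un)
  ultimately show ?thesis using assms unfolding Ev_def by (simp add: card_Pow)
qed

lemma uniq_a:
  assumes st: "simple_theory_on n D" and mp: "models n D = parity n" and r: "(H, G) \<in> D"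
    and E1: "E1 \<subseteq> {1..n}" "even (card E1)" "sat_body E1 G" "\<not> sat_head E1 H"
    and E2: "E2 \<subseteq> {1..n}" "even (card E2)" "sat_body E2 G" "\<not> sat_head E2 H"
  shows "E1 = E2"
proof -
  have cover: "j \<in> vars G \<union> head_vars H"
    if E: "E \<subseteq> {1..n}" "even (card E)" "sat_body E G" "\<not> sat_head E H" and j: "j \<in> {1..n}" for E j
  proof (rule ccontr)
    assume nj: "j \<notin> vars G \<union> head_vars H"
    have KU: "flip E j \<subseteq> {1..n}" using flip_sub[OF E(1) j] .
    have fE: "finite E" using E(1) finite_subset by blast
    have "odd (card (flip E j))" using flip_even[OF fE, of j] E(2) by simp
    then have m: "is_model n D (flip E j)" using is_model_iff[OF mp KU] by simp
    have "sat_body (flip E j) G = sat_body E G"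
    proof (rule sat_body_cong)
      fix x assume "x \<in> vars G" then have "x \<noteq> j" using nj by auto
      then show "(x \<in> flip E j) = (x \<in> E)" by (rule flip_mem)
    qed
    then have "sat_head (flip E j) H" using model_heads[OF m r] E(3) by simp
    moreover have "sat_head (flip E j) H = sat_head E H"
    proof (rule sat_head_cong)
      fix x assume "x \<in> head_vars H" then have "x \<noteq> j" using nj by auto
      then show "(x \<in> flip E j) = (x \<in> E)" by (rule flip_mem)
    qed
    ultimately show False using E(4) by simp
  qed
  show ?thesis
  proof (rule ccontr)
    assume ne: "E1 \<noteq> E2"
    then obtain j where j: "(j \<in> E1) \<noteq> (j \<in> E2)" by blast
    then have jU: "j \<in> {1..n}" using E1(1) E2(1) by auto
    have jG: "j \<notin> vars G" using sat_agree[OF E1(3) E2(3)] j by blast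
    then have jH: "j \<in> head_vars H" using cover[OF E1 jU] by simp
    have eq: "E2 = flip E1 j"
    proof (rule set_eqI)
      fix x show "(x \<in> E2) = (x \<in> flip E1 j)"
      proof (cases "x = j")
        case True then show ?thesis using j flip_mem_j[of j E1] by auto
      next
        case False
        show ?thesis
        proof (cases "x \<in> {1..n}")
          case True
          have "x \<in> vars G"
          proof -
            have "x \<in> vars G \<union> head_vars H" using cover[OF E1 True] .
            moreover have "x \<notin> head_vars H" using jH False by (cases H) auto
            ultimately show ?thesis by simp
          qed
          then show ?thesis using sat_agree[OF E1(3) E2(3)] flip_mem[OF False] by simp
        next
          case nU: False
          then show ?thesis using E1(1) E2(1) flip_mem[OF False] by auto
        qed
      qed
    qed
    have fE: "finite E1" using E1(1) finite_subset by blast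
    show False using flip_even[OF fE, of j] E1(2) E2(2) eq by simp
  qed
qed


lemma decomp:
  assumes n1: "n \<ge> 1" and st: "simple_theory_on n D" and mp: "models n D = parity n"
    and w1: "w \<ge> 1" and c0: "c > 0" and ch: "c + h \<le> n"
  shows "2 ^ n / 2 \<le> real (card D) + real n * (2 ^ n / 2 powr (real h / (4 * real w))
           + real (card D) * (real n * 2 ^ n / 2 ^ (w + 1)) / real c)"
proof -
  define U where "U = {1..n}"
  have fU: "finite U" and cU: "card U = n" unfolding U_def by auto
  have fD: "finite D" using st unfolding simple_theory_on_def by auto
  define Ev where "Ev = {E\<in>Pow U. even (card E)}"
  define S where "S r = {E\<in>Ev. sat_body E (snd r) \<and> \<not> sat_head E (fst r)}" for r
  define Sa where "Sa = (\<Union>r\<in>D. S r)"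
  define B where "B i = snd ` {r\<in>D. \<exists>l. fst r = HLit l \<and> lit_var l = i}" for i
  define T where "T i = {E\<in>Ev. \<forall>G\<in>B i. \<not> sat_body E G}" for i
  define bnd where "bnd = 2 ^ n / 2 powr (real h / (4 * real w))
           + real (card D) * (real n * 2 ^ n / 2 ^ (w + 1)) / real c"
  have 1: "1 \<in> U" using n1 U_def by auto
  have cEv: "real (card Ev) = 2 ^ n / 2"
  proof -
    have "card Ev * 2 = 2 ^ n" using card_even[OF fU 1] cU unfolding Ev_def by simp
    then have "real (card Ev) * 2 = 2 ^ n" by (metis of_nat_mult of_nat_numeral of_nat_power)
    then show ?thesis by simp
  qed
  have fEv: "finite Ev" unfolding Ev_def using fU by simp
  have cover: "Ev \<subseteq> Sa \<union> (\<Union>i\<in>U. T i)"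
  proof
    fix E assume E: "E \<in> Ev"
    show "E \<in> Sa \<union> (\<Union>i\<in>U. T i)"
    proof (cases "E \<in> Sa")
      case True then show ?thesis by simp
    next
      case False
      have EU: "E \<subseteq> {1..n}" and ev: "even (card E)" using E unfolding Ev_def U_def by auto
      have heads: "\<forall>H\<in>reduct D E. sat_head E H"
      proof
        fix H assume "H \<in> reduct D E"
        then obtain G where G: "(H, G) \<in> D" "sat_body E G" unfolding reduct_def by auto
        show "sat_head E H"
        proof (rule ccontr)
          assume "\<not> sat_head E H"
          then have "E \<in> S (H, G)" using E G unfolding S_def by auto
          then show False using False G unfolding Sa_def by auto
        qed
      qed
      have "\<not> is_model n D E" using is_model_iff[OF mp EU] ev by simp
      then obtain J where J: "J \<subseteq> {1..n}" "(\<forall>H\<in>reduct D E. sat_head J H) \<noteq> (J = E)"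
        using EU unfolding is_model_def by blast
      then have JE: "J \<noteq> E" and hJ: "\<forall>H\<in>reduct D E. sat_head J H" using heads by auto
      then obtain i where i: "(i \<in> E) \<noteq> (i \<in> J)" by blast
      then have iU: "i \<in> U" using EU J(1) U_def by auto
      have "E \<in> T i"
      proof -
        have "\<not> sat_body E G" if G: "G \<in> B i" for G
        proof
          assume sb: "sat_body E G"
          obtain l where l: "(HLit l, G) \<in> D" "lit_var l = i" using G unfolding B_def by auto
          have "HLit l \<in> reduct D E" using l sb unfolding reduct_def by auto
          then have "sat_lit E l" "sat_lit J l" using heads hJ by auto
          then show False using l(2) i by (cases l) auto
        qed
        then show ?thesis using E unfolding T_def by auto
      qed
      then show ?thesis using iU by auto
    qed
  qed
  have cSa: "card Sa \<le> card D"
  proof -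
    have "card Sa \<le> (\<Sum>r\<in>D. card (S r))" unfolding Sa_def by (rule card_UN_le[OF fD])
    also have "\<dots> \<le> (\<Sum>r\<in>D. 1)"
    proof (rule sum_mono)
      fix r assume r: "r \<in> D"
      obtain H G where HG: "r = (H, G)" by (cases r)
      have fS: "finite (S r)" unfolding S_def using fEv by auto
      have "\<forall>x\<in>S r. \<forall>y\<in>S r. x = y"
      proof (intro ballI)
        fix x y assume x: "x \<in> S r" and y: "y \<in> S r"
        show "x = y"
          by (rule uniq_a[OF st mp r[unfolded HG]]) (use x y HG in \<open>auto simp: S_def Ev_def U_def\<close>)
      qed
      then show "card (S r) \<le> 1" using card_le_Suc0_iff_eq[OF fS] by simp
    qed
    finally show ?thesis by simp
  qed
  have cT: "real (card (T i)) \<le> bnd" if iU: "i \<in> U" for i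
  proof -
    have fB: "finite (B i)" unfolding B_def using fD by auto
    have cB: "card (B i) \<le> card D"
    proof -
      have "card (B i) \<le> card {r\<in>D. \<exists>l. fst r = HLit l \<and> lit_var l = i}"
        unfolding B_def by (rule card_image_le) (use fD in auto)
      also have "\<dots> \<le> card D" by (rule card_mono[OF fD]) auto
      finally show ?thesis .
    qed
    have BU: "\<forall>G\<in>B i. vars G \<subseteq> U"
      using st unfolding B_def simple_theory_on_def vars_def U_def by fastforce
    have TU: "T i \<subseteq> Pow U" unfolding T_def Ev_def by auto
    have AU: "U - {i} \<subseteq> U" by auto
    have nsat: "\<forall>E\<in>T i. \<forall>G\<in>B i. \<not> sat_body E G" unfolding T_def by auto
    have crit: "\<forall>E\<in>T i. \<forall>j\<in>U - {i}. \<exists>G\<in>B i. sat_body (flip E j) G"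
    proof (intro ballI)
      fix E j assume E: "E \<in> T i" and j: "j \<in> U - {i}"
      have EU: "E \<subseteq> {1..n}" and ev: "even (card E)" using E unfolding T_def Ev_def U_def by auto
      have KU: "flip E j \<subseteq> {1..n}" using flip_sub[OF EU] j U_def by auto
      have fE: "finite E" using EU finite_subset by blast
      have "odd (card (flip E j))" using flip_even[OF fE, of j] ev by simp
      then have m: "is_model n D (flip E j)" using is_model_iff[OF mp KU] by simp
      obtain l G where lG: "(HLit l, G) \<in> D" "lit_var l = i" "sat_body (flip E j) G"
        using model_lit[OF m] iU U_def by blast
      have "G \<in> B i" unfolding B_def using lG by force
      then show "\<exists>G\<in>B i. sat_body (flip E j) G" using lG by blast
    qed
    have cA: "card (U - {i}) = n - 1" using iU fU cU by simp
    have ch': "c + h \<le> card (U - {i}) + 1" using cA ch n1 by simp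
    have "real (card (T i)) \<le> 2 ^ card U / 2 powr (real h / (4 * real w))
           + real (card (B i)) * (real (card U) * 2 ^ card U / 2 ^ (w + 1)) / real c"
      by (rule core[OF fU fB BU TU AU nsat crit w1 c0 ch'])
    also have "\<dots> \<le> bnd" unfolding bnd_def cU
      using cB c0 by (intro add_left_mono divide_right_mono mult_right_mono) auto
    finally show ?thesis .
  qed
  have "card Ev \<le> card (Sa \<union> (\<Union>i\<in>U. T i))"
  proof (rule card_mono[OF _ cover])
    have "Sa \<union> (\<Union>i\<in>U. T i) \<subseteq> Ev" unfolding Sa_def S_def T_def by auto
    then show "finite (Sa \<union> (\<Union>i\<in>U. T i))" using fEv finite_subset by blast
  qed
  also have "\<dots> \<le> card Sa + card (\<Union>i\<in>U. T i)" by (rule card_Un_le)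
  also have "\<dots> \<le> card Sa + (\<Sum>i\<in>U. card (T i))" using card_UN_le[OF fU] by simp
  finally have "real (card Ev) \<le> real (card Sa) + (\<Sum>i\<in>U. real (card (T i)))"
    by (metis of_nat_add of_nat_le_iff of_nat_sum)
  also have "\<dots> \<le> real (card D) + (\<Sum>i\<in>U. bnd)"
    using cSa by (intro add_mono sum_mono cT) auto
  also have "\<dots> = real (card D) + real n * bnd" using cU by simp
  finally show ?thesis using cEv unfolding bnd_def by simp
qed


lemma poly_bound:
  fixes p :: "real poly"
  shows "\<exists>C\<ge>0. \<forall>x\<ge>1. \<bar>poly p x\<bar> \<le> C * x ^ degree p"
proof (intro exI[of _ "\<Sum>i\<le>degree p. \<bar>coeff p i\<bar>"] conjI allI impI)
  show "0 \<le> (\<Sum>i\<le>degree p. \<bar>coeff p i\<bar>)" by (rule sum_nonneg) auto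
  fix x :: real assume x: "x \<ge> 1"
  have "\<bar>poly p x\<bar> = \<bar>\<Sum>i\<le>degree p. coeff p i * x ^ i\<bar>" by (simp add: poly_altdef)
  also have "\<dots> \<le> (\<Sum>i\<le>degree p. \<bar>coeff p i * x ^ i\<bar>)" by (rule sum_abs)
  also have "\<dots> \<le> (\<Sum>i\<le>degree p. \<bar>coeff p i\<bar> * x ^ degree p)"
  proof (rule sum_mono)
    fix i assume i: "i \<in> {..degree p}"
    have "x ^ i \<le> x ^ degree p" using x i by (intro power_increasing) auto
    then show "\<bar>coeff p i * x ^ i\<bar> \<le> \<bar>coeff p i\<bar> * x ^ degree p"
      using x by (simp add: abs_mult mult_left_mono)
  qed
  also have "\<dots> = (\<Sum>i\<le>degree p. \<bar>coeff p i\<bar>) * x ^ degree p" by (simp add: sum_distrib_right)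
  finally show "\<bar>poly p x\<bar> \<le> (\<Sum>i\<le>degree p. \<bar>coeff p i\<bar>) * x ^ degree p" .
qed

lemma divide_out:
  fixes s n X P Q c :: real
  assumes "X > 0" "P > 0" "Q > 0" "c > 0" "X / 2 \<le> s + n * (X / P + s * (n * X / Q) / c)"
  shows "1 / 2 \<le> s / X + n / P + s * n * (n / c) / Q"
proof -
  have "s + n * (X / P + s * (n * X / Q) / c) = X * (s / X + n / P + s * n * (n / c) / Q)"
    using assms(1-4) by (simp add: field_simps)
  then have "X * (1/2) \<le> X * (s / X + n / P + s * n * (n / c) / Q)" using assms(5) by simp
  then show ?thesis using assms(1) by (simp only: mult_le_cancel_left_pos)
qed

lemma key:
  assumes n1: "w \<ge> (2::nat)" and st: "simple_theory_on (w^2) D" and mp: "models (w^2) D = parity (w^2)"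
    and sC: "real (card D) \<le> C * real (w^2) ^ d"
  shows "1/2 \<le> 2 * C * real w ^ (2 * d + 2) / 2 ^ w + real w ^ 2 / 2 powr ((real w ^ 2 - 1) / (8 * real w))"
proof -
  define n where "n = w^2"
  define h where "h = n div 2"
  define c where "c = n - h"
  define s where "s = real (card D)"
  have wn: "w \<le> n" unfolding n_def using n1 by (simp add: power2_eq_square)
  have n1': "n \<ge> 1" using wn n1 by simp
  have c0: "c > 0" unfolding c_def h_def using n1' by simp
  have ch: "c + h \<le> n" unfolding c_def h_def by simp
  have w1: "w \<ge> 1" using n1 by simp
  have D: "2 ^ n / 2 \<le> s + real n * (2 ^ n / 2 powr (real h / (4 * real w))
           + s * (real n * 2 ^ n / 2 ^ (w + 1)) / real c)"
    unfolding s_def using decomp[OF n1' st[folded n_def] mp[folded n_def] w1 c0 ch] .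
  have A: "1 / 2 \<le> s / 2 ^ n + real n / 2 powr (real h / (4 * real w)) + s * real n * (real n / real c) / 2 ^ (w + 1)"
    by (rule divide_out[OF _ _ _ _ D]) (use c0 in auto)
  have s0: "s \<ge> 0" unfolding s_def by simp
  have sn: "s \<le> s * real n" using s0 n1' by (simp add: mult_le_cancel_left1)
  have i: "s / 2 ^ n \<le> s * real n / 2 ^ w"
  proof -
    have "s / 2 ^ n \<le> s / 2 ^ w"
      using s0 wn by (intro divide_left_mono) (auto intro: power_increasing)
    also have "\<dots> \<le> s * real n / 2 ^ w" using sn by (simp add: divide_right_mono)
    finally show ?thesis .
  qed
  have nc: "real n / real c \<le> 2"
  proof -
    have "n \<le> 2 * c" unfolding c_def h_def by simp
    then have "real n \<le> real (2 * c)" by (rule of_nat_mono)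
    then have "real n \<le> 2 * real c" by simp
    then show ?thesis using c0 by (simp add: field_simps)
  qed
  have sn0: "s * real n \<ge> 0" using s0 by simp
  have ii: "s * real n * (real n / real c) / 2 ^ (w + 1) \<le> s * real n / 2 ^ w"
  proof -
    have m: "s * real n * (real n / real c) \<le> s * real n * 2" by (rule mult_left_mono[OF nc sn0])
    have "s * real n * (real n / real c) / 2 ^ (w + 1) \<le> s * real n * 2 / 2 ^ (w + 1)"
      by (rule divide_right_mono[OF m]) simp
    also have "\<dots> = s * real n / 2 ^ w" by simp
    finally show ?thesis .
  qed
  have iii: "real n / 2 powr (real h / (4 * real w)) \<le> real w ^ 2 / 2 powr ((real w ^ 2 - 1) / (8 * real w))"
  proof -
    have "n \<le> 2 * h + 1" unfolding h_def by simp
    then have "real n \<le> real (2 * h + 1)" by (rule of_nat_mono)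
    then have "real h \<ge> (real n - 1) / 2" by simp
    then have "real w ^ 2 - 1 \<le> 2 * real h" unfolding n_def by simp
    then have "(real w ^ 2 - 1) / (8 * real w) \<le> (2 * real h) / (8 * real w)"
      by (rule divide_right_mono) simp
    then have "(real w ^ 2 - 1) / (8 * real w) \<le> real h / (4 * real w)" by simp
    then have "2 powr ((real w ^ 2 - 1) / (8 * real w)) \<le> 2 powr (real h / (4 * real w))" by simp
    then have "real n / 2 powr (real h / (4 * real w)) \<le> real n / 2 powr ((real w ^ 2 - 1) / (8 * real w))"
      by (rule divide_left_mono) auto
    then show ?thesis unfolding n_def by simp
  qed
  have iv: "s * real n / 2 ^ w \<le> C * real w ^ (2 * d + 2) / 2 ^ w"
  proof -
    have "s * real n \<le> C * real (w^2) ^ d * real n" using sC unfolding s_def by (simp add: mult_right_mono)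
    also have "\<dots> = C * real w ^ (2 * d + 2)"
    proof -
      have e: "real w ^ (2 * d + 2) = (real w ^ 2) ^ d * real w ^ 2" by (simp only: power_add power_mult)
      show ?thesis unfolding n_def e by simp
    qed
    finally show ?thesis by (simp add: divide_right_mono)
  qed
  show ?thesis using A i ii iii iv by linarith
qed


theorem mainTheorem18:
  shows "\<not> (\<exists>(p :: real poly) (D :: nat \<Rightarrow> rule set).
            \<forall>n\<ge>1. simple_theory_on n (D n) \<and> models n (D n) = parity n
                  \<and> real (card (D n)) \<le> poly p (real n))"
proof
  assume "\<exists>(p :: real poly) (D :: nat \<Rightarrow> rule set).
            \<forall>n\<ge>1. simple_theory_on n (D n) \<and> models n (D n) = parity n
                  \<and> real (card (D n)) \<le> poly p (real n)"
  then obtain p :: "real poly" and D :: "nat \<Rightarrow> rule set" where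
    H: "\<forall>n\<ge>1. simple_theory_on n (D n) \<and> models n (D n) = parity n \<and> real (card (D n)) \<le> poly p (real n)"
    by blast
  obtain C where C: "C \<ge> 0" "\<forall>x\<ge>1. \<bar>poly p x\<bar> \<le> C * x ^ degree p" using poly_bound by blast
  define d where "d = degree p"
  define f where "f w = 2 * C * real w ^ (2 * d + 2) / 2 ^ w + real w ^ 2 / 2 powr ((real w ^ 2 - 1) / (8 * real w))"
    for w :: nat
  have lim: "f \<longlonglongrightarrow> 0"
  proof -
    have 1: "(\<lambda>w::nat. real w ^ (2 * d + 2) / 2 ^ w) \<longlonglongrightarrow> 0" by real_asymp
    have 2: "(\<lambda>w::nat. real w ^ 2 / 2 powr ((real w ^ 2 - 1) / (8 * real w))) \<longlonglongrightarrow> 0" by real_asymp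
    have "(\<lambda>w::nat. 2 * C * (real w ^ (2 * d + 2) / 2 ^ w) + real w ^ 2 / 2 powr ((real w ^ 2 - 1) / (8 * real w)))
          \<longlonglongrightarrow> 2 * C * 0 + 0"
      by (intro tendsto_intros 1 2)
    then show ?thesis unfolding f_def by simp
  qed
  have "eventually (\<lambda>w. f w < 1/2) sequentially" by (rule order_tendstoD(2)[OF lim]) simp
  then obtain w0 where w0: "\<forall>w\<ge>w0. f w < 1/2" by (auto simp: eventually_sequentially)
  define w where "w = max w0 2"
  have fw: "f w < 1/2" using w0 w_def by simp
  have w2: "w \<ge> 2" unfolding w_def by simp
  have n1: "w ^ 2 \<ge> 1" using w2 by (simp add: power2_eq_square)
  have Hn: "simple_theory_on (w^2) (D (w^2))" "models (w^2) (D (w^2)) = parity (w^2)"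
    "real (card (D (w^2))) \<le> poly p (real (w^2))" using H n1 by auto
  have "real (w^2) \<ge> 1" using n1 by linarith
  then have "\<bar>poly p (real (w^2))\<bar> \<le> C * real (w^2) ^ d" using C(2) unfolding d_def by blast
  then have sC: "real (card (D (w^2))) \<le> C * real (w^2) ^ d" using Hn(3) by linarith
  have "1/2 \<le> f w" unfolding f_def by (rule key[OF w2 Hn(1) Hn(2) sC])
  then show False using fw by simp
qed

end
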